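(* Consider the MaxWeight scheduling system described in the context, with $\boldsymbol\lambda^{(\epsilon)}=\boldsymbol\lambda^{(k)}-\epsilon\mathbf c^{(k)}$, and let $\overline{\mathbf S}$ be the service vector selected by MaxWeight in a slot when the queue-length vector is $\overline{\mathbf Q}^{(\epsilon)}$ (stationary). Then for any $r'>1$ there exist constants $\beta_2<\infty$ and $\epsilon_0>0$, independent of $\epsilon$, such that for all $\epsilon\in(0,\epsilon_0)$, $$\mathbb E\Big[\big(b^{(k)}-\langle\mathbf c^{(k)},\overline{\mathbf S}\rangle\big)^{r'}\Big]\le\beta_2\,\epsilon .$$
   Context: Scheduling system: time is slotted; there are $N$ queues. Arrivals $A_n(t)$ are independent across $n$, i.i.d. over time, nonnegative integer-valued with $A_n(t)\le A_{max}$, with mean vector $\boldsymbol\lambda^{(\epsilon)}$. $\mathcal S\subset\mathbb Z_{\ge0}^N$ is a finite set of feasible service vectors with entries at most $S_{max}$. In each slot a service vector $\mathbf S(t)\in\mathcal S$ is chosen, and $Q_n(t+1)=Q_n(t)+A_n(t)-S_n(t)+U_n(t)$ with $U_n(t)=\max(S_n(t)-A_n(t)-Q_n(t),0)$. The capacity region $\mathcal R=\mathrm{ConvexHull}(\mathcal S)$ is the polyhedron $\{\mathbf r\ge0:\langle\mathbf c^{(j)},\mathbf r\rangle\le b^{(j)},\ j=1,\dots,K\}$, where each $\mathbf c^{(j)}\in\mathbb R^N_{\ge0}$ has Euclidean norm $1$ and $b^{(j)}>0$. The $k$th face is $\mathcal F^{(k)}=\{\mathbf r\in\mathcal R:\langle\mathbf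 c^{(k)},\mathbf r\rangle=b^{(k)}\}$; a face index $k$ and a point $\boldsymbol\lambda^{(k)}$ in the relative interior of $\mathcal F^{(k)}$ are fixed. MaxWeight policy: $\mathbf S(t)$ is chosen uniformly at random from $\arg\max_{\mathbf S\in\mathcal S}\langle\mathbf Q(t),\mathbf S\rangle$. $\overline{\mathbf Q}^{(\epsilon)}$ is distributed according to the stationary distribution of the queue-length chain under MaxWeight. *)

theory Defs
  imports "HOL-Analysis.Analysis" "HOL-Probability.Probability"
begin

definition realvec :: "('n::finite \<Rightarrow> nat) \<Rightarrow> real ^ 'n" where
  "realvec s = (\<chi> i. real (s i))"

definition wt :: "('n::finite \<Rightarrow> nat) \<Rightarrow> ('n \<Rightarrow> nat) \<Rightarrow> nat" where
  "wt q s = (\<Sum>i\<in>UNIV. q i * s i)"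

definition mw_set :: "('n::finite \<Rightarrow> nat) set \<Rightarrow> ('n \<Rightarrow> nat) \<Rightarrow> ('n \<Rightarrow> nat) set" where
  "mw_set S q = {s \<in> S. \<forall>s'\<in>S. wt q s' \<le> wt q s}"

definition mw_service :: "('n::finite \<Rightarrow> nat) set \<Rightarrow> ('n \<Rightarrow> nat) \<Rightarrow> ('n \<Rightarrow> nat) pmf" where
  "mw_service S q = pmf_of_set (mw_set S q)"

definition arrivals :: "('n::finite \<Rightarrow> nat pmf) \<Rightarrow> ('n \<Rightarrow> nat) pmf" where
  "arrivals A = Pi_pmf UNIV 0 A"

text \<open>One-slot transition: Q(t+1) = Q + A - S + U = max(Q + A - S, 0) (nat subtraction).\<close>
definition mw_step :: "('n::finite \<Rightarrow> nat pmf) \<Rightarrow> ('n \<Rightarrow> nat) set \<Rightarrow> ('n \<Rightarrow> nat) \<Rightarrow> ('n \<Rightarrow> nat) pmf" where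
  "mw_step A S q =
     bind_pmf (arrivals A) (\<lambda>a. bind_pmf (mw_service S q) (\<lambda>s. return_pmf (\<lambda>i. q i + a i - s i)))"

definition stationary :: "('n::finite \<Rightarrow> nat pmf) \<Rightarrow> ('n \<Rightarrow> nat) set \<Rightarrow> ('n \<Rightarrow> nat) pmf \<Rightarrow> bool" where
  "stationary A S \<pi> \<longleftrightarrow> bind_pmf \<pi> (mw_step A S) = \<pi>"

definition polyhedron :: "nat \<Rightarrow> (nat \<Rightarrow> real ^ 'n::finite) \<Rightarrow> (nat \<Rightarrow> real) \<Rightarrow> (real ^ 'n) set" where
  "polyhedron K c b = {r. (\<forall>i. 0 \<le> r $ i) \<and> (\<forall>j<K. c j \<bullet> r \<le> b j)}"

end

theory Submission
  imports Defs
begin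

lemma pmf_bdd_integrable:
  fixes f :: "'a \<Rightarrow> real"
  assumes "\<And>x. x \<in> set_pmf M \<Longrightarrow> \<bar>f x\<bar> \<le> B"
  shows "integrable (measure_pmf M) f"
  by (rule measure_pmf.integrable_const_bound[where B=B]) (auto simp: AE_measure_pmf_iff assms)

lemma pmf_expect_bdd:
  fixes f :: "'a \<Rightarrow> real"
  assumes "\<And>x. x \<in> set_pmf M \<Longrightarrow> \<bar>f x\<bar> \<le> B"
  shows "\<bar>measure_pmf.expectation M f\<bar> \<le> B"
proof -
  have i: "integrable M f" by (rule pmf_bdd_integrable[where B=B]) (rule assms)
  have "measure_pmf.expectation M f \<le> measure_pmf.expectation M (\<lambda>x. B)"
    using assms by (intro integral_mono_AE AE_pmfI i) (auto dest: abs_le_D1)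
  moreover have "measure_pmf.expectation M (\<lambda>x. -B) \<le> measure_pmf.expectation M f"
    using assms by (intro integral_mono_AE AE_pmfI i) (auto simp: abs_le_iff, fastforce)
  ultimately show ?thesis by simp
qed

lemma pmf_integral_bind_bdd:
  fixes f :: "'b \<Rightarrow> real"
  assumes "\<And>x y. x \<in> set_pmf M \<Longrightarrow> y \<in> set_pmf (N x) \<Longrightarrow> \<bar>f y\<bar> \<le> B"
  shows "measure_pmf.expectation (bind_pmf M N) f = measure_pmf.expectation M (\<lambda>x. measure_pmf.expectation (N x) f)"
proof -
  define g where "g y = max (-B) (min B (f y))" for y
  have 1: "measure_pmf.expectation (bind_pmf M N) f = measure_pmf.expectation (bind_pmf M N) g"
  proof (intro integral_cong_AE)
    show "AE x in measure_pmf (bind_pmf M N). f x = g x"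
    proof (rule AE_pmfI)
      fix y assume "y \<in> set_pmf (bind_pmf M N)"
      then obtain x where x: "x \<in> set_pmf M" "y \<in> set_pmf (N x)" by auto
      show "f y = g y" using assms[OF x] by (auto simp: g_def)
    qed
  qed auto
  have 2: "measure_pmf.expectation M (\<lambda>x. measure_pmf.expectation (N x) f) = measure_pmf.expectation M (\<lambda>x. measure_pmf.expectation (N x) g)"
  proof (intro integral_cong_AE)
    show "AE x in measure_pmf M. measure_pmf.expectation (N x) f = measure_pmf.expectation (N x) g"
    proof (rule AE_pmfI)
      fix x assume x: "x \<in> set_pmf M"
      show "measure_pmf.expectation (N x) f = measure_pmf.expectation (N x) g"
        by (intro integral_cong_AE) (auto simp: AE_measure_pmf_iff g_def dest!: assms[OF x])
    qed
  qed auto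
  have 3: "measure_pmf.expectation (bind_pmf M N) g = measure_pmf.expectation M (\<lambda>x. measure_pmf.expectation (N x) g)"
    unfolding measure_pmf_bind
    by (rule integral_bind[where K="count_space UNIV" and B="\<bar>B\<bar>" and B'=1])
       (auto simp: g_def measure_pmf_in_subprob_space measure_pmf.emeasure_space_1 intro!: measure_pmf.finite_measure)
  show ?thesis using 1 2 3 by simp
qed

lemma mw_set_ne:
  assumes "finite S" "S \<noteq> {}"
  shows "finite (mw_set S q)" "mw_set S q \<noteq> {}" "mw_set S q \<subseteq> S"
proof -
  show "finite (mw_set S q)" "mw_set S q \<subseteq> S" using assms(1) by (auto simp: mw_set_def)
  have "Max (wt q ` S) \<in> wt q ` S" using assms by (intro Max_in) auto
  then obtain s where s: "s \<in> S" "wt q s = Max (wt q ` S)" by auto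
  have "\<forall>s'\<in>S. wt q s' \<le> wt q s" using s assms by auto
  then show "mw_set S q \<noteq> {}" using s by (auto simp: mw_set_def)
qed

lemma set_mw_service:
  assumes "finite S" "S \<noteq> {}"
  shows "set_pmf (mw_service S q) \<subseteq> S"
  using mw_set_ne[OF assms, of q] by (simp add: mw_service_def)

lemma arrivals_comp: "map_pmf (\<lambda>f. f i) (arrivals A) = A (i::'n::finite)"
  unfolding arrivals_def by (simp add: Pi_pmf_component)

lemma set_arrivals:
  assumes "a \<in> set_pmf (arrivals A)" shows "a i \<in> set_pmf (A (i::'n::finite))"
proof -
  have "a i \<in> set_pmf (map_pmf (\<lambda>f. f i) (arrivals A))" using assms by auto
  then show ?thesis by (simp add: arrivals_comp)
qed

lemma abs_bound_aux:
  fixes hq iq a s :: real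
  assumes "\<bar>hq\<bar> \<le> L" "0 \<le> iq" "iq \<le> 1" "0 \<le> a" "a \<le> Am" "0 \<le> s" "s \<le> Sm"
  shows "\<bar>hq + iq * a - s\<bar> \<le> L + Am + Sm"
proof -
  have 1: "iq * a \<le> a" using assms by (intro mult_left_le_one_le) auto
  have 2: "0 \<le> iq * a" using assms by simp
  have 3: "hq \<le> L" "- hq \<le> L" using assms(1) by auto
  show ?thesis unfolding abs_le_iff using 1 2 3 assms(4-7) by linarith
qed

lemma real_nat_diff_le: "real x - real y \<le> real (x - y)"
  by (cases "y \<le> x") (auto simp: of_nat_diff)

lemma drift_bound:
  fixes A :: "'n::finite \<Rightarrow> nat pmf" and S :: "('n \<Rightarrow> nat) set"
  assumes S_fin: "finite S" and S_ne: "S \<noteq> {}"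
    and S_bd: "\<forall>s\<in>S. \<forall>i. s i \<le> Smax"
    and A_bd: "\<forall>i. set_pmf (A i) \<subseteq> {..Amax}"
    and stat: "stationary A S \<pi>"
  shows "measure_pmf.prob \<pi> {q. q i \<le> m} * measure_pmf.expectation (A i) real
         \<le> measure_pmf.expectation (bind_pmf \<pi> (mw_service S)) (\<lambda>s. real (s i))"
proof -
  define L where "L = m + Amax"
  define h where "h q = real (min (q i) L)" for q :: "'n \<Rightarrow> nat"
  define ind where "ind q = (indicator {q. q i \<le> m} q :: real)" for q :: "'n \<Rightarrow> nat"
  define \<mu> where "\<mu> = measure_pmf.expectation (A i) real"
  define e where "e q = measure_pmf.expectation (mw_service S q) (\<lambda>s. real (s i))" for q
  have hb: "\<bar>h q\<bar> \<le> L" for q by (simp add: h_def)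
  have ib: "0 \<le> ind q" "ind q \<le> 1" for q by (auto simp: ind_def)
  have svc: "s \<in> set_pmf (mw_service S q) \<Longrightarrow> s j \<le> Smax" for s q j
    using set_mw_service[OF S_fin S_ne] S_bd by blast
  have arr: "a \<in> set_pmf (arrivals A) \<Longrightarrow> a i \<le> Amax" for a
    using set_arrivals[of a A i] A_bd by blast
  have \<mu>_eq: "measure_pmf.expectation (arrivals A) (\<lambda>a. real (a i)) = \<mu>"
  proof -
    have "measure_pmf.expectation (map_pmf (\<lambda>f. f i) (arrivals A)) real = measure_pmf.expectation (arrivals A) (\<lambda>a. real (a i))"
      by simp
    then show ?thesis by (simp add: arrivals_comp \<mu>_def)
  qed
  have eb: "\<bar>e q\<bar> \<le> Smax" for q
  proof -
    have "\<bar>e q\<bar> \<le> measure_pmf.expectation (mw_service S q) (\<lambda>s. real Smax)"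
      unfolding e_def using svc by (intro pmf_expect_bdd) auto
    then show ?thesis by simp
  qed
  have step: "measure_pmf.expectation (mw_step A S q) h =
      measure_pmf.expectation (arrivals A) (\<lambda>a. measure_pmf.expectation (mw_service S q) (\<lambda>s. h (\<lambda>j. q j + a j - s j)))" for q
  proof -
    have "measure_pmf.expectation (mw_step A S q) h =
      measure_pmf.expectation (arrivals A) (\<lambda>a. measure_pmf.expectation (bind_pmf (mw_service S q) (\<lambda>s. return_pmf (\<lambda>j. q j + a j - s j))) h)"
      unfolding mw_step_def by (rule pmf_integral_bind_bdd[where B=L]) (rule hb)
    also have "\<dots> = measure_pmf.expectation (arrivals A) (\<lambda>a. measure_pmf.expectation (mw_service S q) (\<lambda>s. measure_pmf.expectation (return_pmf (\<lambda>j. q j + a j - s j)) h))"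
      by (rule Bochner_Integration.integral_cong[OF refl], rule pmf_integral_bind_bdd[where B=L]) (rule hb)
    finally show ?thesis by simp
  qed
  have low: "measure_pmf.expectation (mw_step A S q) h \<ge> h q + ind q * \<mu> - e q" for q
  proof -
    have "measure_pmf.expectation (arrivals A) (\<lambda>a. measure_pmf.expectation (mw_service S q) (\<lambda>s. h (\<lambda>j. q j + a j - s j)))
      \<ge> measure_pmf.expectation (arrivals A) (\<lambda>a. measure_pmf.expectation (mw_service S q) (\<lambda>s. h q + ind q * real (a i) - real (s i)))"
    proof (intro integral_mono_AE[where M="measure_pmf (arrivals A)"] AE_pmfI)
      show "integrable (measure_pmf (arrivals A)) (\<lambda>a. measure_pmf.expectation (mw_service S q) (\<lambda>s. h (\<lambda>j. q j + a j - s j)))"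
        by (rule pmf_bdd_integrable[where B=L]) (rule pmf_expect_bdd, rule hb)
      show "integrable (measure_pmf (arrivals A)) (\<lambda>a. measure_pmf.expectation (mw_service S q) (\<lambda>s. h q + ind q * real (a i) - real (s i)))"
      proof (rule pmf_bdd_integrable[where B="L + Amax + Smax"], rule pmf_expect_bdd)
        fix a s assume a: "a \<in> set_pmf (arrivals A)" and s: "s \<in> set_pmf (mw_service S q)"
        show "\<bar>h q + ind q * real (a i) - real (s i)\<bar> \<le> L + Amax + Smax"
          using arr[OF a] svc[OF s, of i] ib[of q] hb[of q]
          unfolding of_nat_add by (intro abs_bound_aux) auto
      qed
      fix a assume a: "a \<in> set_pmf (arrivals A)"
      show "measure_pmf.expectation (mw_service S q) (\<lambda>s. h q + ind q * real (a i) - real (s i))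
           \<le> measure_pmf.expectation (mw_service S q) (\<lambda>s. h (\<lambda>j. q j + a j - s j))"
      proof (intro integral_mono_AE AE_pmfI)
        show "integrable (measure_pmf (mw_service S q)) (\<lambda>s. h q + ind q * real (a i) - real (s i))"
          using arr[OF a] svc ib hb
          by (intro pmf_bdd_integrable[where B="real L + real Amax + real Smax"] abs_bound_aux) auto
        show "integrable (measure_pmf (mw_service S q)) (\<lambda>s. h (\<lambda>j. q j + a j - s j))"
          using hb by (intro pmf_bdd_integrable[where B="L"])
        fix s assume s: "s \<in> set_pmf (mw_service S q)"
        show "h q + ind q * real (a i) - real (s i) \<le> h (\<lambda>j. q j + a j - s j)"
        proof (cases "q i \<le> m")
          case True
          then show ?thesis using arr[OF a] using real_nat_diff_le[of "q i + a i" "s i"] by (auto simp add: h_def ind_def L_def min_def)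
        next
          case False
          have "real (min (q i) L) - real (s i) \<le> real (min (q i + a i - s i) L)"
            using real_nat_diff_le[of "q i + a i" "s i"] by (auto simp add: min_def)
          then show ?thesis using False by (simp add: h_def ind_def)
        qed
      qed
    qed
    also have "measure_pmf.expectation (arrivals A) (\<lambda>a. measure_pmf.expectation (mw_service S q) (\<lambda>s. h q + ind q * real (a i) - real (s i)))
       = h q + ind q * \<mu> - e q"
    proof -
      have si: "integrable (measure_pmf (mw_service S q)) (\<lambda>s. real (s i))"
        using svc by (intro pmf_bdd_integrable[where B=Smax]) auto
      have ai: "integrable (measure_pmf (arrivals A)) (\<lambda>a. real (a i))"
        using arr by (intro pmf_bdd_integrable[where B=Amax]) auto
      have "measure_pmf.expectation (arrivals A) (\<lambda>a. measure_pmf.expectation (mw_service S q) (\<lambda>s. h q + ind q * real (a i) - real (s i)))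
          = measure_pmf.expectation (arrivals A) (\<lambda>a. (h q - e q) + ind q * real (a i))"
        by (rule Bochner_Integration.integral_cong[OF refl])
           (subst Bochner_Integration.integral_diff, auto simp: si e_def)
      also have "\<dots> = (h q - e q) + ind q * \<mu>"
        using ai by (subst Bochner_Integration.integral_add) (auto simp: \<mu>_eq)
      finally show ?thesis by simp
    qed
    finally show ?thesis using step[of q] by simp
  qed
  have hi: "integrable (measure_pmf \<pi>) h" using hb by (intro pmf_bdd_integrable) auto
  have ei: "integrable (measure_pmf \<pi>) e" using eb by (intro pmf_bdd_integrable) auto
  have ii: "integrable (measure_pmf \<pi>) (indicat_real {q. q i \<le> m})"
    by (rule pmf_bdd_integrable[where B=1]) (auto simp: indicator_def)
  have "measure_pmf.expectation \<pi> h = measure_pmf.expectation (bind_pmf \<pi> (mw_step A S)) h"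
    using stat by (simp add: stationary_def)
  also have "\<dots> = measure_pmf.expectation \<pi> (\<lambda>q. measure_pmf.expectation (mw_step A S q) h)"
    by (rule pmf_integral_bind_bdd[where B=L]) (rule hb)
  also have "\<dots> \<ge> measure_pmf.expectation \<pi> (\<lambda>q. h q + ind q * \<mu> - e q)"
  proof (intro integral_mono_AE AE_pmfI low)
    show "integrable (measure_pmf \<pi>) (\<lambda>q. h q + ind q * \<mu> - e q)"
      unfolding ind_def using hi ei ii by (intro Bochner_Integration.integrable_diff Bochner_Integration.integrable_add) auto
    show "integrable (measure_pmf \<pi>) (\<lambda>q. measure_pmf.expectation (mw_step A S q) h)"
      by (rule pmf_bdd_integrable[where B=L], rule pmf_expect_bdd, rule hb)
  qed
  finally have "measure_pmf.expectation \<pi> (\<lambda>q. h q + ind q * \<mu> - e q) \<le> measure_pmf.expectation \<pi> h" .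
  moreover have "measure_pmf.expectation \<pi> (\<lambda>q. h q + ind q * \<mu> - e q)
     = measure_pmf.expectation \<pi> h + measure_pmf.prob \<pi> {q. q i \<le> m} * \<mu> - measure_pmf.expectation \<pi> e"
    unfolding ind_def using hi ei ii
    by (subst Bochner_Integration.integral_diff, (auto)[2], subst Bochner_Integration.integral_add) auto
  moreover have "measure_pmf.expectation \<pi> e = measure_pmf.expectation (bind_pmf \<pi> (mw_service S)) (\<lambda>s. real (s i))"
    unfolding e_def using svc by (intro pmf_integral_bind_bdd[symmetric, where B=Smax]) auto
  ultimately show ?thesis by (simp add: \<mu>_def)
qed


lemma mean_le:
  fixes A :: "'n::finite \<Rightarrow> nat pmf" and S :: "('n \<Rightarrow> nat) set"
  assumes S_fin: "finite S" and S_ne: "S \<noteq> {}"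
    and S_bd: "\<forall>s\<in>S. \<forall>i. s i \<le> Smax"
    and A_bd: "\<forall>i. set_pmf (A i) \<subseteq> {..Amax}"
    and stat: "stationary A S \<pi>"
  shows "measure_pmf.expectation (A i) real
         \<le> measure_pmf.expectation (bind_pmf \<pi> (mw_service S)) (\<lambda>s. real (s i))"
proof -
  have "(\<lambda>m. measure_pmf.prob \<pi> {q. q i \<le> m}) \<longlonglongrightarrow> measure_pmf.prob \<pi> (\<Union>m. {q. q i \<le> m})"
    by (rule measure_pmf.finite_Lim_measure_incseq) (auto simp: incseq_def)
  moreover have "(\<Union>m. {q::'n\<Rightarrow>nat. q i \<le> m}) = UNIV" by auto
  ultimately have "(\<lambda>m. measure_pmf.prob \<pi> {q. q i \<le> m}) \<longlonglongrightarrow> 1" by simp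
  then have "(\<lambda>m. measure_pmf.prob \<pi> {q. q i \<le> m} * measure_pmf.expectation (A i) real)
      \<longlonglongrightarrow> 1 * measure_pmf.expectation (A i) real"
    by (intro tendsto_mult tendsto_const)
  then show ?thesis
    using drift_bound[OF assms] by (intro LIMSEQ_le_const2) auto
qed

lemma powr_le_lin:
  fixes x bb r :: real
  assumes "0 \<le> x" "x \<le> bb" "1 < r"
  shows "x powr r \<le> bb powr (r - 1) * x"
proof (cases "x = 0")
  case True then show ?thesis using assms by simp
next
  case False
  have "x powr r = x powr ((r - 1) + 1)" by simp
  also have "\<dots> = x powr (r - 1) * x"
    using False assms by (simp only: powr_add powr_one)
  finally have "x powr r = x powr (r - 1) * x" .
  also have "\<dots> \<le> bb powr (r - 1) * x"
    using assms by (intro mult_right_mono powr_mono2) auto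
  finally show ?thesis .
qed

theorem claim1:
  fixes S :: "('n::finite \<Rightarrow> nat) set"
    and Smax Amax :: nat
    and K k :: nat
    and c :: "nat \<Rightarrow> real ^ 'n"
    and b :: "nat \<Rightarrow> real"
    and lamk :: "real ^ 'n"
    and A :: "real \<Rightarrow> 'n \<Rightarrow> nat pmf"
    and emax :: real
    and r' :: real
  assumes S_fin: "finite S" and S_ne: "S \<noteq> {}"
    and S_bd: "\<forall>s\<in>S. \<forall>i. s i \<le> Smax"
    and cap: "convex hull (realvec ` S) = polyhedron K c b"
    and c_nonneg: "\<forall>j<K. \<forall>i. 0 \<le> c j $ i"
    and c_norm: "\<forall>j<K. norm (c j) = 1"
    and b_pos: "\<forall>j<K. 0 < b j"
    and k_lt: "k < K"
    and lamk_face: "lamk \<in> rel_interior {r \<in> polyhedron K c b. c k \<bullet> r = b k}"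
    and emax_pos: "0 < emax"
    and A_bd: "\<forall>\<epsilon>. 0 < \<epsilon> \<and> \<epsilon> < emax \<longrightarrow> (\<forall>i. set_pmf (A \<epsilon> i) \<subseteq> {..Amax})"
    and A_mean: "\<forall>\<epsilon>. 0 < \<epsilon> \<and> \<epsilon> < emax \<longrightarrow>
        (\<forall>i. measure_pmf.expectation (A \<epsilon> i) real = lamk $ i - \<epsilon> * c k $ i)"
    and r'_gt: "1 < r'"
  shows "\<exists>\<beta>2 \<epsilon>0. 0 < \<epsilon>0 \<and> (\<forall>\<epsilon>. 0 < \<epsilon> \<and> \<epsilon> < \<epsilon>0 \<longrightarrow>
           (\<forall>\<pi>. stationary (A \<epsilon>) S \<pi> \<longrightarrow>
              measure_pmf.expectation (bind_pmf \<pi> (mw_service S))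
                 (\<lambda>s. (b k - c k \<bullet> realvec s) powr r') \<le> \<beta>2 * \<epsilon>))"
proof (intro exI conjI allI impI)
  show "0 < emax" by (rule emax_pos)
  fix \<epsilon> :: real and \<pi>
  assume e: "0 < \<epsilon> \<and> \<epsilon> < emax" and stat: "stationary (A \<epsilon>) S \<pi>"
  define T where "T = bind_pmf \<pi> (mw_service S)"
  define \<beta> where "\<beta> = b k powr (r' - 1)"
  have bk: "0 < b k" using b_pos k_lt by auto
  have \<beta>0: "0 \<le> \<beta>" unfolding \<beta>_def by simp
  have sT: "s \<in> S" if "s \<in> set_pmf T" for s
    using that set_mw_service[OF S_fin S_ne] unfolding T_def by auto
  have inner_eq: "c k \<bullet> realvec s = (\<Sum>i\<in>UNIV. c k $ i * real (s i))" for s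
    by (simp add: inner_vec_def realvec_def)
  have cs_le: "c k \<bullet> realvec s \<le> b k" if "s \<in> S" for s
  proof -
    have "realvec s \<in> convex hull (realvec ` S)" using that by (intro hull_inc imageI)
    then have "realvec s \<in> polyhedron K c b" by (simp only: cap)
    then show ?thesis using k_lt unfolding polyhedron_def by blast
  qed
  have cs_ge: "0 \<le> c k \<bullet> realvec s" for s
    unfolding inner_eq using c_nonneg k_lt by (intro sum_nonneg) auto
  have si: "integrable (measure_pmf T) (\<lambda>s. real (s i))" for i
    using sT S_bd by (intro pmf_bdd_integrable[where B=Smax]) auto
  have ET: "measure_pmf.expectation T (\<lambda>s. c k \<bullet> realvec s) = (\<Sum>i\<in>UNIV. c k $ i * measure_pmf.expectation T (\<lambda>s. real (s i)))"
    unfolding inner_eq using si by (subst Bochner_Integration.integral_sum) auto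
  have lam: "c k \<bullet> lamk = b k"
    using rel_interior_subset lamk_face by blast
  have cc: "c k \<bullet> c k = 1"
    using c_norm k_lt by (metis power2_norm_eq_inner power_one)
  have "(\<Sum>i\<in>UNIV. c k $ i * measure_pmf.expectation (A \<epsilon> i) real) \<le> (\<Sum>i\<in>UNIV. c k $ i * measure_pmf.expectation T (\<lambda>s. real (s i)))"
  proof (intro sum_mono mult_left_mono)
    fix i
    show "0 \<le> c k $ i" using c_nonneg k_lt by auto
    have Abd: "\<forall>i. set_pmf (A \<epsilon> i) \<subseteq> {..Amax}" using A_bd e by blast
    show "measure_pmf.expectation (A \<epsilon> i) real \<le> measure_pmf.expectation T (\<lambda>s. real (s i))"
      unfolding T_def by (rule mean_le[OF S_fin S_ne S_bd Abd stat])
  qed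
  moreover have "(\<Sum>i\<in>UNIV. c k $ i * measure_pmf.expectation (A \<epsilon> i) real) = b k - \<epsilon>"
  proof -
    have "(\<Sum>i\<in>UNIV. c k $ i * measure_pmf.expectation (A \<epsilon> i) real) = (\<Sum>i\<in>UNIV. c k $ i * lamk $ i - \<epsilon> * (c k $ i * c k $ i))"
    proof (rule sum.cong[OF refl])
      fix i
      have E: "measure_pmf.expectation (A \<epsilon> i) real = lamk $ i - \<epsilon> * c k $ i" using A_mean e by blast
      show "c k $ i * measure_pmf.expectation (A \<epsilon> i) real = c k $ i * lamk $ i - \<epsilon> * (c k $ i * c k $ i)"
        unfolding E by (simp add: algebra_simps)
    qed
    also have "\<dots> = c k \<bullet> lamk - \<epsilon> * (c k \<bullet> c k)"
      by (simp add: inner_vec_def sum_subtractf sum_distrib_left)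
    finally show ?thesis using lam cc by simp
  qed
  ultimately have Ecs: "b k - \<epsilon> \<le> measure_pmf.expectation T (\<lambda>s. c k \<bullet> realvec s)"
    using ET by simp
  have csi: "integrable (measure_pmf T) (\<lambda>s. c k \<bullet> realvec s)"
    using sT cs_le cs_ge bk by (intro pmf_bdd_integrable[where B="b k"]) (auto simp: abs_le_iff)
  have "measure_pmf.expectation T (\<lambda>s. (b k - c k \<bullet> realvec s) powr r')
      \<le> measure_pmf.expectation T (\<lambda>s. \<beta> * (b k - c k \<bullet> realvec s))"
  proof (intro integral_mono_AE AE_pmfI)
    fix s assume "s \<in> set_pmf T"
    then show "(b k - c k \<bullet> realvec s) powr r' \<le> \<beta> * (b k - c k \<bullet> realvec s)"
      unfolding \<beta>_def using sT cs_le cs_ge r'_gt by (intro powr_le_lin) auto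
  next
    show "integrable (measure_pmf T) (\<lambda>s. \<beta> * (b k - c k \<bullet> realvec s))"
      using csi by auto
    show "integrable (measure_pmf T) (\<lambda>s. (b k - c k \<bullet> realvec s) powr r')"
    proof (rule pmf_bdd_integrable[where B="b k powr r'"])
      fix s assume "s \<in> set_pmf T"
      then have "0 \<le> b k - c k \<bullet> realvec s" "b k - c k \<bullet> realvec s \<le> b k"
        using sT cs_le cs_ge by auto
      then show "\<bar>(b k - c k \<bullet> realvec s) powr r'\<bar> \<le> b k powr r'"
        using r'_gt by (simp add: powr_mono2)
    qed
  qed
  also have "\<dots> = \<beta> * (b k - measure_pmf.expectation T (\<lambda>s. c k \<bullet> realvec s))"
    using csi by simp
  also have "\<dots> \<le> \<beta> * \<epsilon>"
    using Ecs \<beta>0 by (intro mult_left_mono) auto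
  finally show "measure_pmf.expectation (bind_pmf \<pi> (mw_service S))
                 (\<lambda>s. (b k - c k \<bullet> realvec s) powr r') \<le> b k powr (r' - 1) * \<epsilon>"
    unfolding T_def \<beta>_def .
qed

end
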